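(* Let $V = \{v_1, \dots, v_n\}$ be floating-point values (each zero or a normal IEEE 754 double), let $\alpha_i = DP(v_i)$ and $\alpha_{max} = \max\{\alpha_1, \dots, \alpha_n\}$. For each $i$ let $\hat{\beta}_i = \alpha_{max} + \lfloor \log_{10}|v_i| \rfloor + 1$ if $v_i \neq 0$ and $\hat{\beta}_i = 0$ if $v_i = 0$, and let $\hat{\beta}_{max} = \max\{\hat{\beta}_1, \dots, \hat{\beta}_n\}$. Let $g_i = round(v_i \otimes 10^{\alpha_{max}})$. If $\alpha_{max} \le 22$ and $\hat{\beta}_{max} \le 15$, then $v_i = g_i \div 10^{\alpha_{max}}$ for all $1 \le i \le n$, where the division is performed in IEEE 754 double-precision arithmetic.
   Context: Convention: a floating-point value $v$ is identified with the decimal number given by its decimal format, i.e. its shortest decimal representation that reads back to $v$. For a nonzero terminating decimal $x$, the decimal place $DP(x)$ is the least nonnegative integer $j$ with $x \times 10^j$ an integer; $DP(0)=0$. $v \otimes 10^{i}$ and $a \div 10^i$ denote multiplication and division computed in IEEE 754 double-precision arithmetic (round-to-nearest), with $10^i$ represented as a double. $round(\cdot)$ denotes rounding to the nearest integer. *)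

theory Defs
  imports Complex_Main "HOL-Library.Extended_Real"
begin

text \<open>Finite doubles (normal and subnormal; signed zero is identified with 0):
  m * 2^e with |m| < 2^53 and -1074 \<le> e \<le> 971.\<close>
definition dbl_finite :: "real set" where
  "dbl_finite = {of_int m * 2 powi e | m e. \<bar>m\<bar> < 2^53 \<and> -1074 \<le> e \<and> e \<le> 971}"

definition dbl_normal :: "real \<Rightarrow> bool" where
  "dbl_normal v \<longleftrightarrow> v \<in> dbl_finite \<and> 2 powi (-1022) \<le> \<bar>v\<bar>"

definition dbl_even :: "real \<Rightarrow> bool" where
  "dbl_even r \<longleftrightarrow> (\<exists>m e. r = of_int m * 2 powi e \<and> even m \<and> \<bar>m\<bar> < 2^53 \<and> -1074 \<le> e \<and> e \<le> 971)"

definition is_rne :: "real \<Rightarrow> real \<Rightarrow> bool" where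
  "is_rne x r \<longleftrightarrow> r \<in> dbl_finite \<and> (\<forall>s\<in>dbl_finite. \<bar>x - r\<bar> \<le> \<bar>x - s\<bar>) \<and>
     ((\<forall>s\<in>dbl_finite. \<bar>x - s\<bar> = \<bar>x - r\<bar> \<longrightarrow> s = r) \<or> dbl_even r)"

definition dbl_round :: "real \<Rightarrow> ereal" where
  "dbl_round x = (if 2^1024 - 2^970 \<le> x then PInfty
                  else if x \<le> - (2^1024 - 2^970) then MInfty
                  else ereal (THE r. is_rne x r))"

definition dmul :: "real \<Rightarrow> real \<Rightarrow> ereal" where
  "dmul a b = dbl_round (a * b)"

definition ddiv :: "real \<Rightarrow> real \<Rightarrow> ereal" where
  "ddiv a b = dbl_round (a / b)"

definition dbl_pow10 :: "nat \<Rightarrow> real" where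
  "dbl_pow10 i = real_of_ereal (dbl_round (10 ^ i))"

definition is_decimal :: "real \<Rightarrow> bool" where
  "is_decimal x \<longleftrightarrow> (\<exists>(m::int) (j::nat). x = of_int m / 10 ^ j)"

definition DP :: "real \<Rightarrow> nat" where
  "DP x = (LEAST j::nat. x * 10 ^ j \<in> \<int>)"

definition sig_digits :: "real \<Rightarrow> nat" where
  "sig_digits x = (LEAST k::nat. \<exists>(m::int) (e::int). x = of_int m * 10 powi e \<and> \<bar>m\<bar> < 10 ^ k)"

definition dec_reps :: "real \<Rightarrow> real set" where
  "dec_reps v = {x. is_decimal x \<and> dbl_round x = ereal v}"

definition shortest_reps :: "real \<Rightarrow> real set" where
  "shortest_reps v = {x \<in> dec_reps v. \<forall>y\<in>dec_reps v. sig_digits x \<le> sig_digits y}"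

definition decfmt :: "real \<Rightarrow> real" where
  "decfmt v = (SOME x. x \<in> shortest_reps v \<and> (\<forall>y\<in>shortest_reps v. \<bar>x - v\<bar> \<le> \<bar>y - v\<bar>))"

definition round_int :: "real \<Rightarrow> int" where
  "round_int x = \<lfloor>x + 1/2\<rfloor>"

end

theory Submission imports Defs begin

lemma dbl_memI: "\<bar>m\<bar> < 2^53 \<Longrightarrow> -1074 \<le> e \<Longrightarrow> e \<le> 971 \<Longrightarrow> of_int m * 2 powi e \<in> dbl_finite"
  unfolding dbl_finite_def by blast

lemma two_powi_shift: "(e1::int) \<le> e2 \<Longrightarrow> (2::real) powi e2 = 2 ^ nat (e2 - e1) * 2 powi e1"
proof -
  assume "e1 \<le> e2"
  define k where "k = nat (e2 - e1)"
  have k: "e2 = int k + e1" "nat (e2 - e1) = k" using \<open>e1 \<le> e2\<close> unfolding k_def by auto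
  have "(2::real) powi (int k + e1) = 2 ^ k * 2 powi e1" by (simp add: power_int_add)
  then show ?thesis using k by simp
qed

lemma dbl_memI2: assumes "\<bar>m\<bar> = 2^53" "-1074 \<le> e" "e < 971"
  shows "of_int m * 2 powi e \<in> dbl_finite"
proof -
  have "m = 2^53 \<or> m = -(2^53)" using assms(1) by (auto simp: abs_if split: if_splits)
  then have "m = 2 * (m div 2)" by auto
  then have "of_int m * (2::real) powi e = of_int (m div 2) * (2 * 2 powi e)"
    by (metis (no_types, opaque_lifting) mult.assoc mult.commute of_int_mult of_int_numeral)
  also have "(2::real) * 2 powi e = 2 powi (e+1)" by (simp add: power_int_add_1')
  finally have "of_int m * (2::real) powi e = of_int (m div 2) * 2 powi (e+1)" .
  moreover have "\<bar>m div 2\<bar> < 2^53" using assms(1) by (auto simp: abs_if split: if_splits)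
  ultimately show ?thesis using dbl_memI[of "m div 2" "e+1"] assms by simp
qed

lemma dbl_finite_neg: "x \<in> dbl_finite \<Longrightarrow> -x \<in> dbl_finite"
  unfolding dbl_finite_def
  by clarify (rule_tac x="-m" in exI, auto)

lemma dbl_even_neg: "dbl_even x \<Longrightarrow> dbl_even (-x)"
  unfolding dbl_even_def
  by clarify (rule_tac x="-m" in exI, auto)

lemma dbl_finite_finite: "finite dbl_finite"
proof -
  have "dbl_finite \<subseteq> (\<lambda>(m,e). of_int m * (2::real) powi e) ` ({-(2^53)..2^53} \<times> {-1074..971})"
  proof
    fix x assume "x \<in> dbl_finite"
    then obtain m e where "x = of_int m * 2 powi e" "\<bar>m\<bar> < 2^53" "-1074 \<le> e" "e \<le> 971"
      unfolding dbl_finite_def by blast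
    then show "x \<in> (\<lambda>(m,e). of_int m * (2::real) powi e) ` ({-(2^53)..2^53} \<times> {-1074..971})"
      by (intro image_eqI[of _ _ "(m,e)"]) auto
  qed
  then show ?thesis by (rule finite_subset) auto
qed

lemma dbl_evenI: "even m \<Longrightarrow> \<bar>m\<bar> < 2^53 \<Longrightarrow> -1074 \<le> e \<Longrightarrow> e \<le> 971 \<Longrightarrow> dbl_even (of_int m * 2 powi e)"
  unfolding dbl_even_def by blast

lemma zero_dbl: "0 \<in> dbl_finite"
  using dbl_memI[of 0 0] by simp

lemma S1:
  fixes a b e1 e2 :: int
  assumes ha: "\<bar>a\<bar> < 2^53" and he1: "-1074 \<le> e1" and hb: "\<bar>b\<bar> < 2^53"
    and h12: "e1 \<le> e2" and he2: "e2 \<le> 971"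
    and lt: "of_int a * 2 powi e1 < (of_int b * 2 powi e2 :: real)"
  shows "of_int (a+1) * 2 powi e1 \<in> dbl_finite \<and> of_int a * 2 powi e1 < of_int (a+1) * (2::real) powi e1
    \<and> of_int (a+1) * (2::real) powi e1 \<le> of_int b * 2 powi e2
    \<and> (even a \<or> dbl_even (of_int (a+1) * (2::real) powi e1))
    \<and> (of_int (a+1) * (2::real) powi e1 = of_int b * 2 powi e2 \<longrightarrow> a + 1 = b * 2^nat(e2-e1))"
proof -
  define B where "B = b * 2^nat(e2-e1)"
  have p: "(2::real) powi e1 > 0" by simp
  have rB: "of_int b * (2::real) powi e2 = of_int B * 2 powi e1"
    using two_powi_shift[OF h12] by (simp add: B_def)
  have "a < B" using lt rB p by simp
  hence aB: "a + 1 \<le> B" by simp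
  have le: "of_int (a+1) * (2::real) powi e1 \<le> of_int b * 2 powi e2" using aB p rB by simp
  have eqB: "of_int (a+1) * (2::real) powi e1 = of_int b * 2 powi e2 \<longrightarrow> a+1 = B" using p rB by simp
  have lt2: "of_int a * 2 powi e1 < of_int (a+1) * (2::real) powi e1" using p by simp
  show ?thesis
  proof (cases "a + 1 < 2^53")
    case True
    have mem: "of_int (a+1) * (2::real) powi e1 \<in> dbl_finite"
      using True ha he1 h12 he2 by (intro dbl_memI) auto
    have ev: "even a \<or> dbl_even (of_int (a+1) * (2::real) powi e1)"
    proof (cases "even a")
      case False
      then have "even (a+1)" by simp
      then show ?thesis using True ha he1 h12 he2 by (intro disjI2 dbl_evenI) simp_all
    qed simp
    show ?thesis using mem ev le eqB lt2 B_def by simp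
  next
    case False
    then have a1: "a + 1 = 2^53" using ha by simp
    then have "2^53 \<le> B" using aB by simp
    then have "e1 \<noteq> e2" using hb B_def by auto
    then have e1l: "e1 < 971" using h12 he2 by simp
    have mem: "of_int (a+1) * (2::real) powi e1 \<in> dbl_finite"
      using a1 he1 e1l by (intro dbl_memI2) auto
    have "of_int (a+1) * (2::real) powi e1 = of_int (2^52) * (2 * 2 powi e1)" using a1 by simp
    also have "(2::real) * 2 powi e1 = 2 powi (e1+1)" by (simp add: power_int_add_1')
    finally have eq: "of_int (a+1) * (2::real) powi e1 = of_int (2^52) * 2 powi (e1+1)" .
    have "dbl_even (of_int (2^52) * (2::real) powi (e1+1))"
      by (rule dbl_evenI) (use he1 e1l in simp_all)
    then have ev: "dbl_even (of_int (a+1) * (2::real) powi e1)" by (simp only: eq)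
    show ?thesis using mem ev le eqB lt2 B_def by simp
  qed
qed

lemma dbl_finiteE:
  assumes "x \<in> dbl_finite"
  obtains m e where "x = of_int m * 2 powi e" "\<bar>m\<bar> < 2^53" "-1074 \<le> e" "e \<le> 971"
  using assms unfolding dbl_finite_def by blast

lemma dbl_evenE:
  assumes "dbl_even x"
  obtains m e where "x = of_int m * 2 powi e" "even m" "\<bar>m\<bar> < 2^53" "-1074 \<le> e" "e \<le> 971"
  using assms unfolding dbl_even_def by blast

lemma adj_core:
  fixes a b e1 e2 :: int
  assumes ha: "\<bar>a\<bar> < 2^53" and he1: "-1074 \<le> e1" and hb: "\<bar>b\<bar> < 2^53"
    and h12: "e1 \<le> e2" and he2: "e2 \<le> 971"
    and lt: "of_int a * 2 powi e1 < (of_int b * 2 powi e2 :: real)"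
    and nb: "\<forall>s\<in>dbl_finite. \<not> (of_int a * 2 powi e1 < s \<and> s < (of_int b * 2 powi e2 :: real))"
  shows "dbl_even (of_int a * 2 powi e1) \<or> dbl_even (of_int b * (2::real) powi e2)"
proof -
  note S = S1[OF ha he1 hb h12 he2 lt]
  have eq: "of_int (a+1) * (2::real) powi e1 = of_int b * 2 powi e2"
    using S nb by force
  show ?thesis
  proof (cases "even a")
    case True
    then show ?thesis using ha he1 h12 he2 by (intro disjI1 dbl_evenI) simp_all
  next
    case False
    then show ?thesis using S eq by simp
  qed
qed

lemma adj_even:
  assumes r1: "r1 \<in> dbl_finite" and r2: "r2 \<in> dbl_finite" and lt: "r1 < r2"
    and nb: "\<forall>s\<in>dbl_finite. \<not> (r1 < s \<and> s < r2)"
  shows "dbl_even r1 \<or> dbl_even r2"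
proof -
  obtain a e1 where A: "r1 = of_int a * 2 powi e1" "\<bar>a\<bar> < 2^53" "-1074 \<le> e1" "e1 \<le> 971"
    using r1 by (rule dbl_finiteE)
  obtain b e2 where B: "r2 = of_int b * 2 powi e2" "\<bar>b\<bar> < 2^53" "-1074 \<le> e2" "e2 \<le> 971"
    using r2 by (rule dbl_finiteE)
  show ?thesis
  proof (cases "e1 \<le> e2")
    case True
    show ?thesis using adj_core[OF A(2,3) B(2) True B(4)] A B lt nb by simp
  next
    case False
    have nb': "\<forall>s\<in>dbl_finite. \<not> (of_int (-b) * 2 powi e2 < s \<and> s < (of_int (-a) * 2 powi e1 :: real))"
    proof (intro ballI notI)
      fix s assume "s \<in> dbl_finite" "of_int (-b) * 2 powi e2 < s \<and> s < (of_int (-a) * 2 powi e1 :: real)"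
      then have "-s \<in> dbl_finite" "r1 < -s \<and> -s < r2" using A B dbl_finite_neg by auto
      then show False using nb by blast
    qed
    have "dbl_even (of_int (-b) * (2::real) powi e2) \<or> dbl_even (of_int (-a) * (2::real) powi e1)"
      using False A B lt by (intro adj_core[OF _ _ _ _ _ _ nb']) auto
    then have "dbl_even (- r2) \<or> dbl_even (- r1)" using A B by simp
    then show ?thesis using dbl_even_neg by fastforce
  qed
qed

lemma two_even_core:
  fixes a b e1 e2 :: int
  assumes ha: "\<bar>a\<bar> < 2^53" and he1: "-1074 \<le> e1" and hb: "\<bar>b\<bar> < 2^53"
    and h12: "e1 \<le> e2" and he2: "e2 \<le> 971"
    and lt: "of_int a * 2 powi e1 < (of_int b * 2 powi e2 :: real)"
    and ea: "even a" and eb: "even b"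
  shows "\<exists>s\<in>dbl_finite. of_int a * 2 powi e1 < s \<and> s < (of_int b * 2 powi e2 :: real)"
proof -
  note S = S1[OF ha he1 hb h12 he2 lt]
  have "of_int (a+1) * (2::real) powi e1 \<noteq> of_int b * 2 powi e2"
  proof
    assume "of_int (a+1) * (2::real) powi e1 = of_int b * 2 powi e2"
    then have e: "a + 1 = b * 2^nat(e2-e1)" using S by blast
    have "even (a + 1)" unfolding e using eb by simp
    then show False using ea by simp
  qed
  then show ?thesis using S by force
qed

lemma two_even:
  assumes r1: "dbl_even r1" and r2: "dbl_even r2" and lt: "r1 < r2"
  shows "\<exists>s\<in>dbl_finite. r1 < s \<and> s < r2"
proof -
  obtain a e1 where A: "r1 = of_int a * 2 powi e1" "even a" "\<bar>a\<bar> < 2^53" "-1074 \<le> e1" "e1 \<le> 971"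
    using r1 by (rule dbl_evenE)
  obtain b e2 where B: "r2 = of_int b * 2 powi e2" "even b" "\<bar>b\<bar> < 2^53" "-1074 \<le> e2" "e2 \<le> 971"
    using r2 by (rule dbl_evenE)
  show ?thesis
  proof (cases "e1 \<le> e2")
    case True
    show ?thesis using two_even_core[OF A(3,4) B(3) True B(5) _ A(2) B(2)] A B lt by simp
  next
    case False
    have "\<exists>s\<in>dbl_finite. of_int (-b) * 2 powi e2 < s \<and> s < (of_int (-a) * 2 powi e1 :: real)"
      using False A B lt by (intro two_even_core) auto
    then obtain s where "s \<in> dbl_finite" "-r2 < s" "s < -r1" using A B by auto
    then show ?thesis using dbl_finite_neg by (intro bexI[of _ "-s"]) auto
  qed
qed

lemma rne_lt_False:
  assumes h1: "is_rne x r1" and h2: "is_rne x r2" and lt: "r1 < r2"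
  shows False
proof -
  have F1: "r1 \<in> dbl_finite" and m1: "\<forall>s\<in>dbl_finite. \<bar>x - r1\<bar> \<le> \<bar>x - s\<bar>"
    and c1: "(\<forall>s\<in>dbl_finite. \<bar>x - s\<bar> = \<bar>x - r1\<bar> \<longrightarrow> s = r1) \<or> dbl_even r1"
    using h1 unfolding is_rne_def by blast+
  have F2: "r2 \<in> dbl_finite" and m2: "\<forall>s\<in>dbl_finite. \<bar>x - r2\<bar> \<le> \<bar>x - s\<bar>"
    and c2: "(\<forall>s\<in>dbl_finite. \<bar>x - s\<bar> = \<bar>x - r2\<bar> \<longrightarrow> s = r2) \<or> dbl_even r2"
    using h2 unfolding is_rne_def by blast+
  have eq: "\<bar>x - r1\<bar> = \<bar>x - r2\<bar>" using m1 m2 F1 F2 by force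
  have e1: "dbl_even r1" using c1 F2 eq lt by force
  have e2: "dbl_even r2" using c2 F1 eq lt by force
  obtain s where s: "s \<in> dbl_finite" "r1 < s" "s < r2" using two_even[OF e1 e2 lt] by blast
  have "2 * x = r1 + r2" using eq lt by arith
  then have "\<bar>x - s\<bar> < \<bar>x - r1\<bar>" using s by arith
  then show False using m1 s by force
qed

lemma rne_unique: "is_rne x r1 \<Longrightarrow> is_rne x r2 \<Longrightarrow> r1 = r2"
  by (metis linorder_neq_iff rne_lt_False)

lemma rne_exists: "\<exists>r. is_rne x r"
proof -
  let ?D = "(\<lambda>s. \<bar>x - s\<bar>) ` dbl_finite"
  have fin: "finite ?D" using dbl_finite_finite by simp
  have ne: "?D \<noteq> {}" using zero_dbl by blast
  define \<delta> where "\<delta> = Min ?D"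
  obtain r0 where r0: "r0 \<in> dbl_finite" "\<bar>x - r0\<bar> = \<delta>"
    using Min_in[OF fin ne] unfolding \<delta>_def by auto
  have mn: "\<forall>s\<in>dbl_finite. \<delta> \<le> \<bar>x - s\<bar>" using Min_le[OF fin] unfolding \<delta>_def by auto
  have good: "is_rne x r" if "r \<in> dbl_finite" "\<bar>x - r\<bar> = \<delta>" "dbl_even r" for r
    unfolding is_rne_def using that mn by simp
  show ?thesis
  proof (cases "\<forall>s\<in>dbl_finite. \<bar>x - s\<bar> = \<bar>x - r0\<bar> \<longrightarrow> s = r0")
    case True
    have "is_rne x r0" unfolding is_rne_def
    proof (intro conjI disjI1)
      show "r0 \<in> dbl_finite" by (rule r0(1))
      show "\<forall>s\<in>dbl_finite. \<bar>x - r0\<bar> \<le> \<bar>x - s\<bar>" using mn r0(2) by simp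
      show "\<forall>s\<in>dbl_finite. \<bar>x - s\<bar> = \<bar>x - r0\<bar> \<longrightarrow> s = r0" by (rule True)
    qed
    then show ?thesis by blast
  next
    case False
    then obtain r1 where r1: "r1 \<in> dbl_finite" "\<bar>x - r1\<bar> = \<delta>" "r1 \<noteq> r0" using r0 by auto
    define lo where "lo = min r0 r1"
    define hi where "hi = max r0 r1"
    have lohi: "lo \<in> dbl_finite" "hi \<in> dbl_finite" "lo < hi" "\<bar>x - lo\<bar> = \<delta>" "\<bar>x - hi\<bar> = \<delta>"
      using r0 r1 unfolding lo_def hi_def by (auto simp: min_def max_def)
    have mid: "2 * x = lo + hi" using lohi by arith
    have nb: "\<forall>s\<in>dbl_finite. \<not> (lo < s \<and> s < hi)"
    proof (intro ballI notI)
      fix s assume "s \<in> dbl_finite" "lo < s \<and> s < hi"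
      moreover have "\<bar>x - s\<bar> < \<delta>" using mid lohi calculation(2) by arith
      ultimately show False using mn by force
    qed
    have "dbl_even lo \<or> dbl_even hi" using adj_even[OF lohi(1,2,3) nb] .
    then show ?thesis using good lohi by blast
  qed
qed

lemma rne_ex1: "\<exists>!r. is_rne x r"
  using rne_exists rne_unique by blast

lemma rne_self: "x \<in> dbl_finite \<Longrightarrow> is_rne x x"
  unfolding is_rne_def by auto

lemma dbl_round_rne:
  assumes "\<bar>x\<bar> < 2^1024 - 2^970" "is_rne x r"
  shows "dbl_round x = ereal r"
proof -
  have "(THE r. is_rne x r) = r" using assms(2) rne_unique by blast
  then show ?thesis unfolding dbl_round_def using assms(1) by auto
qed

lemma dbl_round_ereal:
  assumes "dbl_round x = ereal v"
  shows "is_rne x v" "\<bar>x\<bar> < 2^1024 - 2^970"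
proof -
  have b: "\<not> (2^1024 - 2^970 \<le> x)" "\<not> (x \<le> - (2^1024 - 2^970))"
    using assms unfolding dbl_round_def by (auto split: if_splits)
  then show "\<bar>x\<bar> < 2^1024 - 2^970" by auto
  have "ereal (THE r. is_rne x r) = ereal v" using assms b unfolding dbl_round_def by simp
  then have "(THE r. is_rne x r) = v" by simp
  then show "is_rne x v" using theI'[OF rne_ex1[of x]] by simp
qed

lemma big_aux: "(P::real) > 0 \<Longrightarrow> (2^53 - 1) * (2 * P) < 2^54 * P - P" by simp
lemma pow971: "(2::real)^971 = 2 * 2^970" by (simp flip: power_Suc)
lemma pow1024: "(2::real)^1024 = 2^54 * 2^970" by (simp flip: power_add)

lemma dbl_bound:
  assumes "x \<in> dbl_finite" shows "\<bar>x\<bar> < 2^1024 - 2^970"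
proof -
  obtain m e where A: "x = of_int m * 2 powi e" "\<bar>m\<bar> < 2^53" "-1074 \<le> e" "e \<le> 971"
    using assms by (rule dbl_finiteE)
  have "\<bar>m\<bar> \<le> 2^53 - 1" using A(2) by simp
  then have "real_of_int \<bar>m\<bar> \<le> real_of_int (2^53 - 1)" by (simp only: of_int_le_iff)
  then have m: "\<bar>of_int m\<bar> \<le> (2^53 - 1 :: real)" by simp
  have "(2::real) powi e \<le> 2 powi 971" using A(4) by (intro power_int_increasing) auto
  also have "(2::real) powi 971 = 2^971" using power_int_of_nat[of "2::real" 971] by simp
  finally have p: "(2::real) powi e \<le> 2^971" .
  have "\<bar>x\<bar> = \<bar>of_int m\<bar> * 2 powi e" using A(1) by (simp add: abs_mult)
  also have "\<dots> \<le> (2^53 - 1) * 2^971" using m p by (intro mult_mono) auto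
  also have "\<dots> < 2^1024 - 2^970" unfolding pow971 pow1024 by (rule big_aux) simp
  finally show ?thesis .
qed

lemma dbl_round_self: "x \<in> dbl_finite \<Longrightarrow> dbl_round x = ereal x"
  using dbl_round_rne[OF dbl_bound rne_self] .

lemma pow_1022: "(2::real) powi (-1022) = 2^52 * 2 powi (-1074)"
proof -
  have "(2::real) powi (-1022) = 2 powi (52 + (-1074))" by simp
  also have "\<dots> = 2 powi 52 * 2 powi (-1074)" by (rule power_int_add) simp
  also have "(2::real) powi 52 = 2^52" using power_int_of_nat[of "2::real" 52] by simp
  finally show ?thesis .
qed

lemma normalize_aux:
  "\<forall>m e. k = nat (2^53 - \<bar>m\<bar>) \<longrightarrow> m \<noteq> 0 \<longrightarrow> \<bar>m\<bar> < 2^53 \<longrightarrow> -1074 \<le> e \<longrightarrow> e \<le> 971 \<longrightarrow>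
     2 powi (-1022) \<le> \<bar>of_int m * (2::real) powi e\<bar> \<longrightarrow>
     (\<exists>M E. of_int m * 2 powi e = of_int M * (2::real) powi E \<and> 2^52 \<le> \<bar>M\<bar> \<and> \<bar>M\<bar> < 2^53 \<and> -1074 \<le> E \<and> E \<le> 971)"
proof (induction k rule: less_induct)
  case (less k)
  show ?case
  proof (intro allI impI)
    fix m :: int and e :: int
    assume k: "k = nat (2^53 - \<bar>m\<bar>)" and m0: "m \<noteq> 0" and mb: "\<bar>m\<bar> < 2^53" and e1: "-1074 \<le> e"
      and e2: "e \<le> 971" and nrm: "2 powi (-1022) \<le> \<bar>of_int m * (2::real) powi e\<bar>"
    show "\<exists>M E. of_int m * 2 powi e = of_int M * (2::real) powi E \<and> 2^52 \<le> \<bar>M\<bar> \<and> \<bar>M\<bar> < 2^53 \<and> -1074 \<le> E \<and> E \<le> 971"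
    proof (cases "2^52 \<le> \<bar>m\<bar>")
      case True
      then show ?thesis using mb e1 e2 by blast
    next
      case False
      have "e \<noteq> -1074"
      proof
        assume ee: "e = -1074"
        have "\<bar>m\<bar> \<le> 2^52 - 1" using False by simp
        then have "real_of_int \<bar>m\<bar> \<le> real_of_int (2^52 - 1)" by (simp only: of_int_le_iff)
        then have "\<bar>of_int m\<bar> \<le> (2^52 - 1 :: real)" by simp
        then have "\<bar>of_int m\<bar> * (2::real) powi (-1074) \<le> (2^52 - 1) * 2 powi (-1074)"
          by (intro mult_right_mono) simp_all
        also have "\<dots> < 2^52 * 2 powi (-1074)" by simp
        also have "\<dots> = 2 powi (-1022)" by (simp add: pow_1022)
        finally show False using nrm ee by (simp add: abs_mult)
      qed
      then have e1': "-1074 \<le> e - 1" using e1 by simp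
      have lt: "nat (2^53 - \<bar>2*m\<bar>) < k" using k m0 mb False by (simp add: abs_mult)
      have b2: "\<bar>2*m\<bar> < 2^53" using False by (simp add: abs_mult)
      have eq: "of_int (2*m) * (2::real) powi (e - 1) = of_int m * 2 powi e"
      proof -
        have "(2::real) powi e = 2 powi ((e - 1) + 1)" by simp
        also have "\<dots> = 2 * 2 powi (e - 1)" by (rule power_int_add_1') simp
        finally show ?thesis by simp
      qed
      have m0': "2 * m \<noteq> 0" using m0 by simp
      have e2': "e - 1 \<le> 971" using e2 by simp
      have nrm': "2 powi (-1022) \<le> \<bar>of_int (2*m) * (2::real) powi (e - 1)\<bar>" by (simp only: eq nrm)
      have "\<exists>M E. of_int (2*m) * (2::real) powi (e - 1) = of_int M * (2::real) powi E \<and> 2^52 \<le> \<bar>M\<bar> \<and> \<bar>M\<bar> < 2^53 \<and> -1074 \<le> E \<and> E \<le> 971"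
        using less.IH[OF lt, rule_format, OF refl m0' b2 e1' e2' nrm'] .
      then show ?thesis by (simp only: eq)
    qed
  qed
qed

lemma dbl_normalize:
  assumes "dbl_normal v"
  obtains M E where "v = of_int M * 2 powi E" "2^52 \<le> \<bar>M\<bar>" "\<bar>M\<bar> < 2^53" "-1074 \<le> E" "E \<le> 971"
proof -
  obtain m e where A: "v = of_int m * 2 powi e" "\<bar>m\<bar> < 2^53" "-1074 \<le> e" "e \<le> 971"
    using assms unfolding dbl_normal_def by (blast elim: dbl_finiteE)
  have nrm: "2 powi (-1022) \<le> \<bar>v\<bar>" using assms unfolding dbl_normal_def by blast
  have "m \<noteq> 0"
  proof
    assume "m = 0"
    then have "v = 0" using A by simp
    moreover have "(0::real) < 2 powi (-1022)" by simp
    ultimately show False using nrm by simp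
  qed
  then show ?thesis using normalize_aux[of "nat (2^53 - \<bar>m\<bar>)"] A nrm that by metis
qed

lemma top_exp:
  fixes M :: int
  assumes "\<bar>M\<bar> = 2^53 - 1"
  defines "P \<equiv> (2::real)^970"
  shows "\<bar>of_int M * (2::real) powi 971\<bar> = (2^54 - 2) * P" "(2::real)^1024 - 2^970 = 2^54 * P - P"
    "(2::real) powi 971 = 2 * P" "P > 0"
proof -
  have h: "(2::real) powi 971 = 2 * P" using power_int_of_nat[of "2::real" 971] pow971 unfolding P_def by simp
  show "(2::real) powi 971 = 2 * P" by (rule h)
  have "real_of_int \<bar>M\<bar> = real_of_int (2^53 - 1)" using assms(1) by (simp only:)
  then have m: "\<bar>of_int M\<bar> = (2^53 - 1 :: real)" by simp
  show "\<bar>of_int M * (2::real) powi 971\<bar> = (2^54 - 2) * P" unfolding abs_mult m h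
    unfolding P_def by (simp add: algebra_simps)
  show "(2::real)^1024 - 2^970 = 2^54 * P - P" unfolding P_def pow1024 ..
  show "P > 0" unfolding P_def by simp
qed

lemma near_bound:
  assumes nv: "dbl_normal v" and r: "is_rne d v" and dT: "\<bar>d\<bar> < 2^1024 - 2^970"
  shows "\<bar>d - v\<bar> \<le> \<bar>v\<bar> / 2^53"
proof -
  obtain M E where N: "v = of_int M * 2 powi E" "2^52 \<le> \<bar>M\<bar>" "\<bar>M\<bar> < 2^53" "-1074 \<le> E" "E \<le> 971"
    using nv by (rule dbl_normalize)
  define h where "h = (2::real) powi E"
  have hpos: "h > 0" unfolding h_def by simp
  have mn: "\<forall>s\<in>dbl_finite. \<bar>d - v\<bar> \<le> \<bar>d - s\<bar>" using r unfolding is_rne_def by blast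
  have up: "d - v \<le> h/2"
  proof (rule ccontr)
    assume "\<not> d - v \<le> h/2"
    then have dv: "d - v > h/2" by simp
    have sF: "of_int (M+1) * h \<in> dbl_finite"
    proof (cases "\<bar>M+1\<bar> < 2^53")
      case True
      then show ?thesis unfolding h_def using N by (intro dbl_memI) auto
    next
      case False
      then have M1: "M + 1 = 2^53" using N(3) by simp
      show ?thesis
      proof (cases "E < 971")
        case True
        then show ?thesis unfolding h_def using N M1 by (intro dbl_memI2) auto
      next
        case False
        then have E: "E = 971" using N by simp
        have "\<bar>M\<bar> = 2^53 - 1" using M1 by simp
        note T = top_exp[OF this]
        have "M > 0" using M1 by simp
        then have "v = (2^54 - 2) * 2^970" using T(1) N(1) E by simp
        moreover have "h = 2 * 2^970" using T(3) E h_def by simp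
        ultimately have "d > 2^54 * 2^970 - 2^970" using dv by simp
        then show ?thesis using dT T(2) by simp
      qed
    qed
    have "of_int (M+1) * h = v + h" using N(1) h_def by (simp add: algebra_simps)
    then have "\<bar>d - of_int (M+1) * h\<bar> < \<bar>d - v\<bar>" using dv hpos by simp
    then show False using mn sF by force
  qed
  have lo: "v - d \<le> h/2"
  proof (rule ccontr)
    assume "\<not> v - d \<le> h/2"
    then have dv: "v - d > h/2" by simp
    have sF: "of_int (M-1) * h \<in> dbl_finite"
    proof (cases "\<bar>M-1\<bar> < 2^53")
      case True
      then show ?thesis unfolding h_def using N by (intro dbl_memI) auto
    next
      case False
      then have M1: "M - 1 = -(2^53)" using N(3) by simp
      show ?thesis
      proof (cases "E < 971")
        case True
        then show ?thesis unfolding h_def using N M1 by (intro dbl_memI2) auto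
      next
        case False
        then have E: "E = 971" using N by simp
        have "\<bar>M\<bar> = 2^53 - 1" using M1 by simp
        note T = top_exp[OF this]
        have "M < 0" using M1 by simp
        then have "v = - ((2^54 - 2) * 2^970)" using T(1) N(1) E by (simp add: abs_mult mult_less_0_iff)
        moreover have "h = 2 * 2^970" using T(3) E h_def by simp
        ultimately have "d < - (2^54 * 2^970 - 2^970)" using dv by simp
        then show ?thesis using dT T(2) by simp
      qed
    qed
    have "of_int (M-1) * h = v - h" using N(1) h_def by (simp add: algebra_simps)
    then have "\<bar>d - of_int (M-1) * h\<bar> < \<bar>d - v\<bar>" using dv hpos by simp
    then show False using mn sF by force
  qed
  have "real_of_int (2^52) \<le> real_of_int \<bar>M\<bar>" using N(2) by (simp only: of_int_le_iff)
  then have "(2^52::real) \<le> \<bar>of_int M\<bar>" by simp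
  then have "2^52 * h \<le> \<bar>v\<bar>" using N(1) hpos unfolding h_def by (simp add: abs_mult)
  then have "h/2 \<le> \<bar>v\<bar> / 2^53" by simp
  moreover have "\<bar>d - v\<bar> \<le> h/2" using up lo by arith
  ultimately show ?thesis by linarith
qed

lemma dbl_is_decimal:
  assumes "x \<in> dbl_finite" shows "is_decimal x"
proof -
  obtain m e where A: "x = of_int m * 2 powi e" "\<bar>m\<bar> < 2^53" "-1074 \<le> e" "e \<le> 971"
    using assms by (rule dbl_finiteE)
  show ?thesis
  proof (cases "0 \<le> e")
    case True
    define k where "k = nat e"
    have "e = int k" using True k_def by simp
    then have "x = of_int (m * 2^k) / 10^0" using A(1) by simp
    then show ?thesis unfolding is_decimal_def by blast
  next
    case False
    define k where "k = nat (-e)"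
    have "e = - int k" using False k_def by simp
    then have "(2::real) powi e = inverse (2^k)" by (simp add: power_int_minus)
    also have "\<dots> = 5^k / 10^k"
    proof -
      have "(10::real)^k = 2^k * 5^k" by (simp flip: power_mult_distrib)
      then show ?thesis by (simp add: field_simps)
    qed
    finally have "x = of_int (m * 5^k) / 10^k" using A(1) by simp
    then show ?thesis unfolding is_decimal_def by blast
  qed
qed

lemma sig_rep:
  assumes "is_decimal x"
  shows "\<exists>m e. x = of_int m * 10 powi e \<and> \<bar>m\<bar> < 10^(sig_digits x)"
proof -
  obtain m :: int and j :: nat where x: "x = of_int m / 10^j" using assms unfolding is_decimal_def by blast
  have "x = of_int m * 10 powi (- int j)" using x by (simp add: power_int_minus divide_inverse)
  moreover have "\<bar>m\<bar> < 10^(nat \<bar>m\<bar>)"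
  proof -
    have "nat \<bar>m\<bar> < 2^(nat \<bar>m\<bar>)" by (rule less_exp)
    also have "(2::nat)^(nat \<bar>m\<bar>) \<le> 10^(nat \<bar>m\<bar>)" by (rule power_mono) simp_all
    finally have "int (nat \<bar>m\<bar>) < int (10^(nat \<bar>m\<bar>))" by linarith
    then show ?thesis by simp
  qed
  ultimately have "\<exists>k m e. x = of_int m * 10 powi e \<and> \<bar>m\<bar> < 10^k" by blast
  then show ?thesis unfolding sig_digits_def by (rule LeastI_ex)
qed

lemma sig_digits_0: "sig_digits 0 = 0"
  unfolding sig_digits_def by (rule Least_eq_0, rule exI[of _ 0], rule exI[of _ 0]) simp

lemma sig_digits_0_imp: "is_decimal x \<Longrightarrow> sig_digits x = 0 \<Longrightarrow> x = 0"
  using sig_rep[of x] by auto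

lemma powi10_less_imp: "(10::real) powi a < 10 powi b \<Longrightarrow> a < b"
proof (rule ccontr)
  assume "10 powi a < (10::real) powi b" "\<not> a < b"
  moreover have "(10::real) powi b \<le> 10 powi a" using calculation(2) by (intro power_int_increasing) auto
  ultimately show False by simp
qed

lemma fin_reps:
  assumes v0: "v \<noteq> 0"
  shows "finite {x. is_decimal x \<and> dbl_round x = ereal v \<and> sig_digits x = K}"
proof -
  define c where "c = \<bar>v\<bar> / (2 * 10^K)"
  have c0: "c > 0" using v0 unfolding c_def by simp
  obtain n where n: "(1/10::real)^n < c" using real_arch_pow_inv[OF c0, of "1/10"] by auto
  have "{x. is_decimal x \<and> dbl_round x = ereal v \<and> sig_digits x = K}
      \<subseteq> (\<lambda>(m,e). of_int m * (10::real) powi e) ` ({-(10^K)..10^K} \<times> {-int n..1024})"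
  proof
    fix x assume "x \<in> {x. is_decimal x \<and> dbl_round x = ereal v \<and> sig_digits x = K}"
    then have dx: "is_decimal x" and rx: "dbl_round x = ereal v" and sx: "sig_digits x = K" by auto
    obtain m e where me: "x = of_int m * 10 powi e" "\<bar>m\<bar> < 10^K" using sig_rep[OF dx] sx by auto
    have rne: "is_rne x v" and xT: "\<bar>x\<bar> < 2^1024 - 2^970" using dbl_round_ereal[OF rx] by auto
    have "\<bar>x - v\<bar> \<le> \<bar>x - 0\<bar>" using rne zero_dbl unfolding is_rne_def by blast
    then have vx: "\<bar>v\<bar> \<le> 2 * \<bar>x\<bar>" by arith
    have m0: "m \<noteq> 0" using vx v0 me(1) by auto
    have p: "(0::real) < 10 powi e" by simp
    have "real_of_int 1 \<le> real_of_int \<bar>m\<bar>" using m0 by (simp only: of_int_le_iff)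
    then have m1: "1 \<le> \<bar>of_int m::real\<bar>" by simp
    have "real_of_int \<bar>m\<bar> < real_of_int (10^K)" using me(2) by (simp only: of_int_less_iff)
    then have mK: "\<bar>of_int m::real\<bar> < 10^K" by simp
    have ax: "\<bar>x\<bar> = \<bar>of_int m\<bar> * 10 powi e" using me(1) by (simp add: abs_mult)
    have "(10::real) powi e \<le> \<bar>x\<bar>" unfolding ax using m1 p by simp
    also have "\<dots> < 2^1024" using xT by simp
    also have "(2::real)^1024 \<le> 10^1024" by (rule power_mono) simp_all
    also have "(10::real)^1024 = 10 powi 1024" using power_int_of_nat[of "10::real" 1024] by (simp only: of_nat_numeral)
    finally have eu: "e < 1024" by (rule powi10_less_imp)
    have "(10::real) powi (- int n) = (1/10)^n" by (simp add: power_int_minus power_divide inverse_eq_divide)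
    also have "\<dots> < c" by (rule n)
    also have "c \<le> \<bar>x\<bar> / 10^K" unfolding c_def using vx by (simp add: field_simps)
    also have "\<dots> < 10 powi e"
    proof -
      have "\<bar>x\<bar> < 10^K * 10 powi e" unfolding ax using mK p by simp
      then show ?thesis by (simp add: field_simps)
    qed
    finally have el: "- int n < e" by (rule powi10_less_imp)
    show "x \<in> (\<lambda>(m,e). of_int m * (10::real) powi e) ` ({-(10^K)..10^K} \<times> {-int n..1024})"
      using me eu el by (intro image_eqI[of _ _ "(m,e)"]) auto
  qed
  then show ?thesis by (rule finite_subset) auto
qed

lemma decfmt_in:
  assumes vF: "v \<in> dbl_finite"
  shows "decfmt v \<in> dec_reps v"
proof -
  have vin: "v \<in> dec_reps v" unfolding dec_reps_def using dbl_is_decimal[OF vF] dbl_round_self[OF vF] by simp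
  define K where "K = (LEAST k. \<exists>x\<in>dec_reps v. sig_digits x = k)"
  have "\<exists>x\<in>dec_reps v. sig_digits x = K" unfolding K_def
    by (rule LeastI_ex) (use vin in blast)
  then obtain x0 where x0: "x0 \<in> dec_reps v" "sig_digits x0 = K" by blast
  have Kle: "\<forall>y\<in>dec_reps v. K \<le> sig_digits y" unfolding K_def by (auto intro: Least_le)
  have x0s: "x0 \<in> shortest_reps v" unfolding shortest_reps_def using x0 Kle by auto
  have sub: "shortest_reps v \<subseteq> {x. is_decimal x \<and> dbl_round x = ereal v \<and> sig_digits x = K}"
    unfolding shortest_reps_def dec_reps_def using x0 Kle unfolding dec_reps_def by force
  have fin: "finite (shortest_reps v)"
  proof (cases "v = 0")
    case False
    show ?thesis using fin_reps[OF False, of K] sub by (rule finite_subset[rotated])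
  next
    case True
    have "0 \<in> dec_reps v" using vin True by simp
    then have "K = 0" using Kle sig_digits_0 by force
    then have "shortest_reps v \<subseteq> {0}" using sub sig_digits_0_imp by auto
    then show ?thesis by (rule finite_subset) simp
  qed
  let ?D = "(\<lambda>x. \<bar>x - v\<bar>) ` shortest_reps v"
  have finD: "finite ?D" using fin by simp
  have neD: "?D \<noteq> {}" using x0s by blast
  obtain x1 where x1: "x1 \<in> shortest_reps v" "\<bar>x1 - v\<bar> = Min ?D" using Min_in[OF finD neD] by auto
  have "\<forall>y\<in>shortest_reps v. \<bar>x1 - v\<bar> \<le> \<bar>y - v\<bar>" using Min_le[OF finD] x1(2) by auto
  then have "\<exists>x. x \<in> shortest_reps v \<and> (\<forall>y\<in>shortest_reps v. \<bar>x - v\<bar> \<le> \<bar>y - v\<bar>)" using x1(1) by blast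
  then have "decfmt v \<in> shortest_reps v" unfolding decfmt_def by (rule someI2_ex) blast
  then show ?thesis unfolding shortest_reps_def by blast
qed

lemma DP_int:
  assumes "is_decimal d" "DP d \<le> a"
  shows "d * 10^a \<in> \<int>"
proof -
  obtain m :: int and j :: nat where x: "d = of_int m / 10^j" using assms unfolding is_decimal_def by blast
  have "d * 10^j \<in> \<int>" using x by simp
  then have "d * 10^(DP d) \<in> \<int>" unfolding DP_def by (rule LeastI)
  then have "d * 10^(DP d) * 10^(a - DP d) \<in> \<int>" by (rule Ints_mult) simp
  moreover have "d * 10^(DP d) * 10^(a - DP d) = d * 10^a" using assms(2)
    by (simp add: mult.assoc flip: power_add)
  ultimately show ?thesis by simp
qed

lemma pow10_dbl:
  assumes "a \<le> 22" shows "dbl_pow10 a = 10^a"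
proof -
  have "(5::int)^a \<le> 5^22" using assms by (intro power_increasing) simp_all
  also have "(5::int)^22 < 2^53" by simp
  finally have b: "\<bar>(5::int)^a\<bar> < 2^53" by simp
  have "(10::real)^a = of_int (5^a) * 2 powi (int a)" by (simp flip: power_mult_distrib)
  moreover have "of_int (5^a) * (2::real) powi (int a) \<in> dbl_finite" using b assms by (intro dbl_memI) simp_all
  ultimately have "(10::real)^a \<in> dbl_finite" by simp
  then show ?thesis unfolding dbl_pow10_def using dbl_round_self by simp
qed

lemma main_one:
  assumes vals: "v = 0 \<or> dbl_normal v"
    and dp: "DP (decfmt v) \<le> a" and a22: "a \<le> 22"
    and bnd: "v \<noteq> 0 \<Longrightarrow> int a + \<lfloor>log 10 \<bar>decfmt v\<bar>\<rfloor> + 1 \<le> 15"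
  shows "ereal v = ddiv (real_of_ereal (dbl_round (of_int (round_int (real_of_ereal (dmul v (dbl_pow10 a))))))) (dbl_pow10 a)"
proof -
  have P: "dbl_pow10 a = 10^a" using pow10_dbl[OF a22] .
  have Ppos: "(0::real) < 10^a" by simp
  show ?thesis
  proof (cases "v = 0")
    case True
    have r0: "round_int 0 = 0" unfolding round_int_def by simp
    show ?thesis using True unfolding P dmul_def ddiv_def
      by (simp add: dbl_round_self[OF zero_dbl] r0)
  next
    case False
    then have nv: "dbl_normal v" using vals by simp
    then have vF: "v \<in> dbl_finite" unfolding dbl_normal_def by simp
    define d where "d = decfmt v"
    have din: "d \<in> dec_reps v" unfolding d_def by (rule decfmt_in[OF vF])
    then have dd: "is_decimal d" and dr: "dbl_round d = ereal v" unfolding dec_reps_def by auto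
    have rne: "is_rne d v" and dT: "\<bar>d\<bar> < 2^1024 - 2^970" using dbl_round_ereal[OF dr] by auto
    have d0: "d \<noteq> 0"
    proof
      assume "d = 0"
      then have "\<bar>d - v\<bar> \<le> \<bar>d - 0\<bar>" using rne zero_dbl unfolding is_rne_def by blast
      then show False using \<open>d = 0\<close> False by simp
    qed
    have "d * 10^a \<in> \<int>" using DP_int[OF dd] dp unfolding d_def by simp
    then obtain N where dN: "d * 10^a = of_int N" by (auto elim: Ints_cases)
    have "\<lfloor>log 10 \<bar>d\<bar>\<rfloor> < 15 - int a" using bnd[OF False] unfolding d_def by simp
    then have "log 10 \<bar>d\<bar> < real_of_int (15 - int a)" by (simp only: floor_less_iff)
    then have "log 10 \<bar>d\<bar> < 15 - real a" by simp
    then have "10 powr (log 10 \<bar>d\<bar>) < 10 powr (15 - real a)" by (rule powr_less_mono) simp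
    then have "\<bar>d\<bar> < 10 powr (15 - real a)" using d0 by simp
    then have "\<bar>d\<bar> * 10 powr (real a) < 10 powr (15 - real a) * 10 powr (real a)" by (intro mult_strict_right_mono) simp_all
    also have "\<dots> = 10 powr 15" by (simp flip: powr_add)
    also have "\<dots> = 10^15" using powr_realpow[of 10 15] by simp
    finally have "\<bar>d\<bar> * 10^a < 10^15" using powr_realpow[of 10 a] by simp
    moreover have "\<bar>of_int N\<bar> = \<bar>d\<bar> * (10::real)^a" unfolding dN[symmetric] by (simp add: abs_mult)
    ultimately have dNb: "\<bar>of_int N\<bar> < (10^15::real)" by simp
    then have "\<bar>N\<bar> < 10^15" by (metis of_int_abs of_int_less_iff of_int_numeral of_int_power)
    then have Nb: "\<bar>N\<bar> < 2^53" by simp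
    have NF: "of_int N \<in> dbl_finite" using dbl_memI[OF Nb, of 0] by simp
    have near: "\<bar>d - v\<bar> \<le> \<bar>v\<bar> / 2^53" by (rule near_bound[OF nv rne dT])
    define y where "y = \<bar>v\<bar> * 10^a"
    have "\<bar>v\<bar> \<le> \<bar>d\<bar> + \<bar>v\<bar> / 2^53" using near by arith
    then have "y \<le> \<bar>d\<bar> * 10^a + y / 2^53" unfolding y_def using Ppos
      by (metis distrib_right mult_right_mono less_imp_le times_divide_eq_left)
    then have "y - y / 2^53 < 10^15" using \<open>\<bar>d\<bar> * 10^a < 10^15\<close> by linarith
    then have yb: "y < 2^51" by simp
    define x where "x = v * 10^a"
    have "\<bar>x - of_int N\<bar> = \<bar>v - d\<bar> * 10^a" unfolding x_def dN[symmetric]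
    proof -
      have "v * 10^a - d * 10^a = (v - d) * (10::real)^a" by (simp add: algebra_simps)
      then show "\<bar>v * 10^a - d * 10^a\<bar> = \<bar>v - d\<bar> * (10::real)^a" by (simp add: abs_mult)
    qed
    also have "\<dots> \<le> \<bar>v\<bar> / 2^53 * 10^a" using near Ppos by (intro mult_right_mono) (simp_all add: abs_minus_commute)
    also have "\<dots> = y / 2^53" unfolding y_def by simp
    finally have xN: "\<bar>x - of_int N\<bar> < 1/4" using yb by simp
    obtain r where r: "is_rne x r" using rne_exists by blast
    have xT: "\<bar>x\<bar> < 2^1024 - 2^970"
    proof -
      have "\<bar>x\<bar> = y" unfolding x_def y_def by (simp add: abs_mult)
      also have "y < 2^51" by (rule yb)
      also have "(2::real)^51 < 2^1024 - 2^970" unfolding pow1024 by simp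
      finally show ?thesis .
    qed
    have dm: "dmul v (10^a) = ereal r" unfolding dmul_def x_def[symmetric] by (rule dbl_round_rne[OF xT r])
    have "\<bar>x - r\<bar> \<le> \<bar>x - of_int N\<bar>" using r NF unfolding is_rne_def by blast
    then have "\<bar>r - of_int N\<bar> < 1/2" using xN by arith
    then have rN: "round_int r = N" unfolding round_int_def by (subst floor_eq_iff) arith
    have "dbl_round (of_int N) = ereal (of_int N)" by (rule dbl_round_self[OF NF])
    moreover have "of_int N / 10^a = d" using dN Ppos by (simp add: field_simps)
    ultimately have "ddiv (real_of_ereal (dbl_round (of_int N))) (10^a) = ereal v"
      unfolding ddiv_def using dr by simp
    then show ?thesis unfolding P dm real_of_ereal.simps rN by simp
  qed
qed

theorem theorem5:
  fixes v :: "nat \<Rightarrow> real" and n :: nat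
  assumes n_pos: "1 \<le> n"
    and vals: "\<forall>i\<in>{1..n}. v i = 0 \<or> dbl_normal (v i)"
    and amax: "\<alpha>max = Max ((\<lambda>i. DP (decfmt (v i))) ` {1..n})"
    and beta: "\<forall>i. \<beta> i = (if v i = 0 then 0
                   else int \<alpha>max + \<lfloor>log 10 \<bar>decfmt (v i)\<bar>\<rfloor> + 1)"
    and bmax: "\<beta>max = Max (\<beta> ` {1..n})"
    and g: "\<forall>i. g i = round_int (real_of_ereal (dmul (v i) (dbl_pow10 \<alpha>max)))"
    and a22: "\<alpha>max \<le> 22"
    and b15: "\<beta>max \<le> 15"
  shows "\<forall>i\<in>{1..n}. ereal (v i) =
           ddiv (real_of_ereal (dbl_round (of_int (g i)))) (dbl_pow10 \<alpha>max)"
proof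
  fix i assume i: "i \<in> {1..n}"
  have dp: "DP (decfmt (v i)) \<le> \<alpha>max" unfolding amax using i by (intro Max_ge) auto
  have bi: "\<beta> i \<le> \<beta>max" unfolding bmax using i by (intro Max_ge) auto
  have bnd: "int \<alpha>max + \<lfloor>log 10 \<bar>decfmt (v i)\<bar>\<rfloor> + 1 \<le> 15" if "v i \<noteq> 0"
    using bi b15 beta that by (metis order_trans)
  show "ereal (v i) = ddiv (real_of_ereal (dbl_round (of_int (g i)))) (dbl_pow10 \<alpha>max)"
    unfolding g[rule_format] using main_one[OF _ dp a22 bnd] vals i by blast
qed

end
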